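(* Let $A>0$, let $c_0\in\mathrm{Imm}(S^1,\mathbb R^2)$ have constant speed $|c_{0,\theta}|\equiv\ell/2\pi$ where $\ell=\ell(c_0)$, and let $0<\varepsilon<\min\{2\sqrt{A\ell},\ell^{3/2}\}/8$. Let $c:[0,1]\times S^1\to\mathbb R^2$ be a smooth path in $\mathrm{Imm}(S^1,\mathbb R^2)$ with $c(0,\cdot)=c_0$ which is horizontal ($\langle c_t,c_\theta\rangle\equiv0$) and satisfies $\int_{S^1}(1+A\kappa_{c(t)}^2)|c_t|^2|c_\theta|\,d\theta=\varepsilon^2$ for all $t\in[0,1]$. Then with $\eta=4(\ell^{3/4}A^{-1/4}+\ell^{1/4})\sqrt\varepsilon$, $$\max_{\theta\in S^1}|c(0,\theta)-c(1,\theta)|\le\eta.$$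
   Context: $S^1=\mathbb R/2\pi\mathbb Z$, $\mathbb R^2\cong\mathbb C$. $\mathrm{Imm}(S^1,\mathbb R^2)$ is the space of smooth immersions; a smooth path in it is a jointly smooth map $c(t,\theta)$ with each $c(t,\cdot)$ an immersion. $\ell(c)=\int_{S^1}|c_\theta|\,d\theta$, $\kappa_c=\det(c_\theta,c_{\theta\theta})/|c_\theta|^3$. *)

theory Defs
  imports "HOL-Analysis.Analysis"
begin

text \<open>A path of closed curves is a function c :: real => real => complex, c t theta,
  with t in [0,1] and theta in R, 2 pi-periodic in theta (S^1 = R / 2 pi Z).\<close>

definition dt :: "(real \<Rightarrow> real \<Rightarrow> complex) \<Rightarrow> real \<Rightarrow> real \<Rightarrow> complex" where
  "dt f t \<theta> = vector_derivative (\<lambda>s. f s \<theta>) (at t within {0..1})"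

definition dth :: "(real \<Rightarrow> real \<Rightarrow> complex) \<Rightarrow> real \<Rightarrow> real \<Rightarrow> complex" where
  "dth f t \<theta> = vector_derivative (\<lambda>x. f t x) (at \<theta>)"

fun iter_partial :: "bool list \<Rightarrow> (real \<Rightarrow> real \<Rightarrow> complex) \<Rightarrow> real \<Rightarrow> real \<Rightarrow> complex" where
  "iter_partial [] f = f"
| "iter_partial (True # w) f = dt (iter_partial w f)"
| "iter_partial (False # w) f = dth (iter_partial w f)"

definition jointly_smooth :: "(real \<Rightarrow> real \<Rightarrow> complex) \<Rightarrow> bool" where
  "jointly_smooth c \<longleftrightarrow> (\<forall>w.
     continuous_on ({0..1} \<times> UNIV) (\<lambda>(t,\<theta>). iter_partial w c t \<theta>) \<and>
     (\<forall>t\<in>{0..1}. \<forall>\<theta>.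
        ((\<lambda>s. iter_partial w c s \<theta>) has_vector_derivative dt (iter_partial w c) t \<theta>) (at t within {0..1}) \<and>
        ((\<lambda>x. iter_partial w c t x) has_vector_derivative dth (iter_partial w c) t \<theta>) (at \<theta>)))"

definition smooth_imm_path :: "(real \<Rightarrow> real \<Rightarrow> complex) \<Rightarrow> bool" where
  "smooth_imm_path c \<longleftrightarrow> jointly_smooth c \<and>
     (\<forall>t\<in>{0..1}. \<forall>\<theta>. c t (\<theta> + 2*pi) = c t \<theta>) \<and>
     (\<forall>t\<in>{0..1}. \<forall>\<theta>. dth c t \<theta> \<noteq> 0)"

definition det2 :: "complex \<Rightarrow> complex \<Rightarrow> real" where
  "det2 a b = Re a * Im b - Im a * Re b"

definition curve_length :: "(real \<Rightarrow> complex) \<Rightarrow> real" where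
  "curve_length \<gamma> = integral {0..2*pi} (\<lambda>\<theta>. norm (vector_derivative \<gamma> (at \<theta>)))"

definition curvature :: "(real \<Rightarrow> complex) \<Rightarrow> real \<Rightarrow> real" where
  "curvature \<gamma> \<theta> = det2 (vector_derivative \<gamma> (at \<theta>))
       (vector_derivative (\<lambda>x. vector_derivative \<gamma> (at x)) (at \<theta>))
     / norm (vector_derivative \<gamma> (at \<theta>)) ^ 3"

end

theory Submission
  imports Defs
begin


lemma norm_vd:
  fixes g :: "real \<Rightarrow> complex"
  assumes "(g has_vector_derivative g') (at t within S)" "g t \<noteq> 0"
  shows "((\<lambda>s. norm (g s)) has_vector_derivative (g t \<bullet> g') / norm (g t)) (at t within S)"
proof -
  have "((\<lambda>x. norm x) has_derivative (\<lambda>h. h \<bullet> sgn (g t))) (at (g t))"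
    by (rule has_derivative_norm[OF assms(2)])
  from has_derivative_compose[OF assms(1)[unfolded has_vector_derivative_def] this]
  have "((\<lambda>s. norm (g s)) has_derivative (\<lambda>h. (h *\<^sub>R g') \<bullet> sgn (g t))) (at t within S)" .
  moreover have "(\<lambda>h. (h *\<^sub>R g') \<bullet> sgn (g t)) = (\<lambda>h. h *\<^sub>R ((g t \<bullet> g') / norm (g t)))"
    by (intro ext) (simp add: sgn_div_norm inner_commute divide_inverse_commute)
  ultimately show ?thesis unfolding has_vector_derivative_def by simp
qed


lemma inner_vd:
  fixes f g :: "real \<Rightarrow> complex"
  assumes "(f has_vector_derivative f') (at t within S)" "(g has_vector_derivative g') (at t within S)"
  shows "((\<lambda>s. f s \<bullet> g s) has_vector_derivative (f t \<bullet> g' + f' \<bullet> g t)) (at t within S)"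
proof -
  have "((\<lambda>s. f s \<bullet> g s) has_derivative (\<lambda>h. f t \<bullet> (h *\<^sub>R g') + (h *\<^sub>R f') \<bullet> g t)) (at t within S)"
    using has_derivative_inner[OF assms[unfolded has_vector_derivative_def]] by simp
  moreover have "(\<lambda>h. f t \<bullet> (h *\<^sub>R g') + (h *\<^sub>R f') \<bullet> g t) = (\<lambda>h. h *\<^sub>R (f t \<bullet> g' + f' \<bullet> g t))"
    by (intro ext) (simp add: distrib_left)
  ultimately show ?thesis unfolding has_vector_derivative_def by simp
qed


lemma vd_bound:
  fixes f :: "real \<Rightarrow> 'a::real_normed_vector"
  assumes "\<And>x. x\<in>{a..b} \<Longrightarrow> (f has_vector_derivative f' x) (at x within {a..b})"
    "\<And>x. x\<in>{a..b} \<Longrightarrow> norm (f' x) \<le> B" "x\<in>{a..b}" "y\<in>{a..b}"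
  shows "norm (f x - f y) \<le> B * \<bar>x - y\<bar>"
proof -
  have "norm (f x - f y) \<le> B * norm (x - y)"
  proof (rule differentiable_bound[where f'="\<lambda>x h. h *\<^sub>R f' x"])
    show "convex {a..b}" by simp
    show "(f has_derivative (\<lambda>h. h *\<^sub>R f' x)) (at x within {a..b})" if "x\<in>{a..b}" for x
      using assms(1)[OF that] by (simp add: has_vector_derivative_def)
    show "onorm (\<lambda>h. h *\<^sub>R f' x) \<le> B" if "x\<in>{a..b}" for x
      using assms(2)[OF that] onorm_scaleR_left[OF bounded_linear_ident, of "f' x"]
      by (simp add: onorm_id)
    show "x \<in> {a..b}" "y \<in> {a..b}" using assms by auto
  qed
  then show ?thesis by simp
qed


lemma alg_perp:
  fixes V T W :: complex
  assumes "V \<bullet> T = 0" "T \<noteq> 0"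
  shows "\<bar>V \<bullet> W\<bar> = norm V * \<bar>det2 T W\<bar> / norm T"
proof -
  have bc: "(V \<bullet> W) * (T \<bullet> T) = (V \<bullet> T) * (W \<bullet> T) + det2 T V * det2 T W"
    by (simp add: inner_complex_def det2_def algebra_simps)
  have lg: "(V \<bullet> V) * (T \<bullet> T) = (V \<bullet> T)^2 + (det2 T V)^2"
    by (simp add: inner_complex_def det2_def power2_eq_square algebra_simps)
  have nT: "T \<bullet> T = (norm T)^2" "V \<bullet> V = (norm V)^2" by (simp_all add: power2_norm_eq_inner)
  have sq: "(det2 T V)^2 = (norm V * norm T)^2" using lg nT assms(1) by (simp add: power_mult_distrib)
  have "\<bar>det2 T V\<bar> = sqrt ((det2 T V)^2)" by simp
  also have "\<dots> = sqrt ((norm V * norm T)^2)" using sq by simp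
  also have "\<dots> = norm V * norm T" by simp
  finally have d: "\<bar>det2 T V\<bar> = norm V * norm T" .
  have e: "(V \<bullet> W) * (norm T)^2 = det2 T V * det2 T W" using bc assms(1) nT by simp
  have "\<bar>V \<bullet> W\<bar> * (norm T)^2 = \<bar>det2 T V\<bar> * \<bar>det2 T W\<bar>"
    using arg_cong[OF e, of abs] by (simp add: abs_mult)
  also have "\<dots> = norm V * norm T * \<bar>det2 T W\<bar>" using d by simp
  finally have f: "\<bar>V \<bullet> W\<bar> * (norm T)^2 = norm V * norm T * \<bar>det2 T W\<bar>" .
  have "norm T > 0" using assms by simp
  with f show ?thesis by (simp add: power2_eq_square field_simps)
qed


lemma int_amgm:
  fixes h f g :: "real \<Rightarrow> real"
  assumes "h integrable_on S" "f integrable_on S" "g integrable_on S"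
    "\<And>x. x \<in> S \<Longrightarrow> (h x)^2 \<le> f x * g x" "\<And>x. x \<in> S \<Longrightarrow> 0 \<le> f x" "\<And>x. x \<in> S \<Longrightarrow> 0 \<le> g x"
    "integral S f \<le> F" "F > 0" "integral S g = G" "G > 0"
  shows "integral S h \<le> sqrt (F * G)"
proof -
  define l where "l = sqrt (G / F)"
  have l: "l > 0" using assms by (simp add: l_def)
  have pt: "h x \<le> (l * f x + g x / l) / 2" if "x \<in> S" for x
  proof -
    have nn: "0 \<le> (l * f x + g x / l) / 2" using assms(5,6)[OF that] l by simp
    have "((l * f x + g x / l) / 2)^2 - f x * g x = ((l * f x - g x / l) / 2)^2"
      using l by (simp add: power2_eq_square field_simps)
    then have "(h x)^2 \<le> ((l * f x + g x / l) / 2)^2"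
      using assms(4)[OF that] zero_le_power2[of "(l * f x - g x / l) / 2"] by linarith
    then have "\<bar>h x\<bar> \<le> \<bar>(l * f x + g x / l) / 2\<bar>" using abs_le_square_iff by blast
    then show ?thesis using nn by linarith
  qed
  have a: "(\<lambda>x. l * f x) integrable_on S" "(\<lambda>x. g x / l) integrable_on S"
    using assms(2,3) by (auto intro: integrable_on_divide integrable_on_mult_right)
  have int2: "(\<lambda>x. (l * f x + g x / l) / 2) integrable_on S"
    by (intro integrable_on_divide integrable_add a)
  have "integral S h \<le> integral S (\<lambda>x. (l * f x + g x / l) / 2)"
    by (rule integral_le[OF assms(1) int2 pt])
  also have "\<dots> = (l * integral S f + integral S g / l) / 2"
  proof -
    show ?thesis
      by (simp add: integral_divide integral_add[OF a] integral_mult_right)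
  qed
  also have "\<dots> \<le> (l * F + G / l) / 2" using assms l by (simp add: mult_left_mono)
  also have "\<dots> = sqrt (F * G)"
  proof -
    have sF: "sqrt F * sqrt F = F" "sqrt G * sqrt G = G" "sqrt F > 0" "sqrt G > 0" using assms by auto
    have ld: "l = sqrt G / sqrt F" by (simp add: l_def real_sqrt_divide)
    have "l * F = sqrt F * sqrt G" unfolding ld using sF by (simp add: field_simps)
    moreover have "G / l = sqrt F * sqrt G" unfolding ld using sF by (simp add: field_simps)
    moreover have "sqrt (F * G) = sqrt F * sqrt G" by (simp add: real_sqrt_mult)
    ultimately show ?thesis by simp
  qed
  finally show ?thesis .
qed


lemma cont_slice_t:
  fixes f :: "real \<Rightarrow> real \<Rightarrow> 'c::topological_space"
  assumes "continuous_on ({0..1} \<times> UNIV) (\<lambda>(t,\<theta>). f t \<theta>)"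
  shows "continuous_on {0..1} (\<lambda>s. f s \<theta>)"
proof -
  have "continuous_on {0..1} (\<lambda>s. (\<lambda>(t,\<theta>). f t \<theta>) (s, \<theta>))"
    by (rule continuous_on_compose2[OF assms]) (auto intro!: continuous_intros)
  then show ?thesis by simp
qed

lemma cont_slice_x:
  fixes f :: "real \<Rightarrow> real \<Rightarrow> 'c::topological_space"
  assumes "continuous_on ({0..1} \<times> UNIV) (\<lambda>(t,\<theta>). f t \<theta>)" "t \<in> {0..1}"
  shows "continuous_on S (\<lambda>x. f t x)"
proof -
  have "continuous_on S (\<lambda>x. (\<lambda>(t,\<theta>). f t \<theta>) (t, x))"
    by (rule continuous_on_compose2[OF assms(1)]) (use assms(2) in \<open>auto intro!: continuous_intros\<close>)
  then show ?thesis by simp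
qed

lemma cont_swap:
  fixes f :: "real \<Rightarrow> real \<Rightarrow> 'c::topological_space"
  assumes "continuous_on ({0..1} \<times> UNIV) (\<lambda>(t,\<theta>). f t \<theta>)" "b \<le> 1" "0 \<le> a"
  shows "continuous_on (UNIV \<times> {a..b}) (\<lambda>(x,s). f s x)"
proof -
  have sub: "(\<lambda>z. (snd z, fst z)) ` (UNIV \<times> {a..b}) \<subseteq> {0..1} \<times> UNIV"
  proof
    fix y assume "y \<in> (\<lambda>z. (snd z, fst z)) ` (UNIV \<times> {a..b})"
    then obtain x s where "y = (s, x)" "a \<le> s" "s \<le> b" by auto
    then show "y \<in> {0..1} \<times> UNIV" using assms(2,3) by auto
  qed
  have "continuous_on (UNIV \<times> {a..b}) (\<lambda>z. (\<lambda>(t,\<theta>). f t \<theta>) (snd z, fst z))"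
    by (rule continuous_on_compose2[OF assms(1) _ sub]) (intro continuous_intros)
  then show ?thesis by (simp add: case_prod_beta')
qed



lemma numeric:
  fixes P Q R :: real
  assumes P: "P > 0" and Q: "Q > 0" and R: "R > 0"
    and h1: "Q^4 < R^2 * P^4 / 4" and h2: "Q^4 < P^12 / 8"
  shows "(P*Q/2 + Q^4/R^2)^2 + (P*Q/2 + Q^4/R^2 + Q^4/R^2/2)^2
          + (Q^4/R^2 * (P*Q/2 + Q^4/R^2 + Q^4/R^2/2) + Q^4 / (P*Q/2 + Q^4/R^2 - Q^4/R^2/2))
         \<le> 4 * (P^6 * (1/R) * Q^2 + P^2 * Q^2)"
    and "(P*Q/2 + Q^4/R^2)^2 \<le> P^8 / 2"
proof -
  define x1 where "x1 = P*Q/2"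
  define b where "b = Q^4/R^2"
  define u where "u = P^2 * Q^2"
  define v where "v = P^6 * Q^2 / R"
  have x1p: "x1 > 0" using P Q by (simp add: x1_def)
  have bp: "b > 0" using Q R by (simp add: b_def)
  have q1: "Q^2 < R*P^2/2"
  proof (rule power_less_imp_less_base[of _ 2])
    show "(Q^2)^2 < (R*P^2/2)^2" using h1 by (simp add: power_mult_distrib power_divide flip: power_mult)
    show "0 \<le> R*P^2/2" using R by simp
  qed
  have q2: "Q < P^3"
  proof (rule power_less_imp_less_base[of _ 4])
    have "(P^3)^4 = P^12" by (simp flip: power_mult)
    moreover have "0 < Q^4" using Q by simp
    ultimately show "Q^4 < (P^3)^4" using h2 by linarith
    show "0 \<le> P^3" using P by simp
  qed
  have q3: "Q^2 < P^6/2"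
  proof (rule power_less_imp_less_base[of _ 2])
    have "(P^6/2)^2 = P^12/4" by (simp add: power_divide flip: power_mult)
    moreover have "(Q^2)^2 = Q^4" by (simp flip: power_mult)
    moreover have "0 < Q^4" using Q by simp
    ultimately show "(Q^2)^2 < (P^6/2)^2" using h2 by linarith
    show "0 \<le> P^6/2" using P by simp
  qed
  have c1: "2*Q^3 \<le> P^5*R"
  proof -
    have "Q^3 = Q^2 * Q" by (simp add: power_numeral_reduce)
    also have "\<dots> \<le> (R*P^2/2) * P^3" using q1 q2 Q P R by (intro mult_mono) auto
    also have "\<dots> = P^5*R/2" by (simp add: power_numeral_reduce)
    finally show ?thesis by simp
  qed
  have s1: "b * x1 \<le> v/4"
  proof -
    have "v/4 - b*x1 = P*Q^2*(P^5*R - 2*Q^3)/(4*R^2)"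
      unfolding v_def b_def x1_def using R by (simp add: field_simps power_numeral_reduce)
    also have "\<dots> \<ge> 0" using c1 P R by simp
    finally show ?thesis by simp
  qed
  have c2: "8*Q^6 \<le> P^6*R^3"
  proof -
    have "(Q^2)^3 \<le> (R*P^2/2)^3" using q1 Q by (intro power_mono) auto
    then show ?thesis by (simp add: power_mult_distrib power_divide mult.commute flip: power_mult)
  qed
  have s2: "b^2 \<le> v/8"
  proof -
    have "v/8 - b^2 = Q^2*(P^6*R^3 - 8*Q^6)/(8*R^4)"
      unfolding v_def b_def using R by (simp add: field_simps power_numeral_reduce)
    also have "\<dots> \<ge> 0" using c2 Q R by simp
    finally show ?thesis by simp
  qed
  have s3: "Q^4 / (x1 + b - b/2) \<le> 2*u"
  proof -
    have "Q^4 / (x1 + b - b/2) \<le> Q^4 / x1"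
      using x1p bp Q by (intro divide_left_mono) auto
    also have "\<dots> = 2 * Q^3 / P" unfolding x1_def using P Q by (simp add: field_simps power_numeral_reduce)
    also have "\<dots> \<le> 2 * u"
    proof -
      have "Q^3 \<le> P^3 * Q^2"
      proof -
        have "Q^3 = Q * Q^2" by (simp add: power_numeral_reduce)
        also have "\<dots> \<le> P^3 * Q^2" using q2 Q by (intro mult_right_mono) auto
        finally show ?thesis .
      qed
      then have "Q^3 / P \<le> P^2 * Q^2" using P by (simp add: divide_le_eq power_numeral_reduce algebra_simps)
      then show ?thesis unfolding u_def by simp
    qed
    finally show ?thesis .
  qed
  have sum: "(x1 + b)^2 + (x1 + b + b/2)^2 + b * (x1 + b + b/2) = 2*x1^2 + 6*(b*x1) + 19/4 * b^2"
    by (simp add: power2_eq_square algebra_simps)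
  have ux: "x1^2 = u/4" unfolding x1_def u_def by (simp add: power_mult_distrib power_divide)
  have vpos: "v \<ge> 0" using P Q R by (simp add: v_def)
  have upos: "u \<ge> 0" by (simp add: u_def)
  have "(x1 + b)^2 + (x1 + b + b/2)^2 + (b * (x1 + b + b/2) + Q^4 / (x1 + b - b/2)) \<le> 4 * (v + u)"
  proof -
    have e: "(x1 + b)^2 + (x1 + b + b/2)^2 + (b * (x1 + b + b/2) + Q^4 / (x1 + b - b/2))
        = ((x1 + b)^2 + (x1 + b + b/2)^2 + b * (x1 + b + b/2)) + Q^4 / (x1 + b - b/2)"
      by (simp only: add.assoc)
    have g: "\<And>X2 BX B2 E. X2 = u/4 \<Longrightarrow> BX \<le> v/4 \<Longrightarrow> B2 \<le> v/8 \<Longrightarrow> E \<le> 2*u \<Longrightarrow> 2*X2 + 6*BX + 19/4*B2 + E \<le> 4*(v+u)"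
      using vpos upos by (simp add: field_simps)
    have "2*x1^2 + 6*(b*x1) + 19/4 * b^2 + Q^4 / (x1 + b - b/2) \<le> 4 * (v + u)"
      by (rule g[OF ux s1 s2 s3])
    then show ?thesis unfolding e sum .
  qed
  then show "(P*Q/2 + Q^4/R^2)^2 + (P*Q/2 + Q^4/R^2 + Q^4/R^2/2)^2
          + (Q^4/R^2 * (P*Q/2 + Q^4/R^2 + Q^4/R^2/2) + Q^4 / (P*Q/2 + Q^4/R^2 - Q^4/R^2/2))
         \<le> 4 * (P^6 * (1/R) * Q^2 + P^2 * Q^2)"
    unfolding x1_def b_def u_def v_def by simp
  have bb: "b < P^4/4" unfolding b_def using h1 R by (simp add: divide_less_eq mult.commute)
  have bb2: "b^2 \<le> P^8/16"
  proof -
    have "b^2 \<le> (P^4/4)^2" using bb bp by (intro power_mono) auto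
    then show ?thesis by (simp add: power_divide flip: power_mult)
  qed
  have uu: "u \<le> P^8/2"
  proof -
    have "u = P^2 * Q^2" by (simp add: u_def)
    also have "\<dots> \<le> P^2 * (P^6/2)" using q3 P by (intro mult_left_mono) auto
    also have "\<dots> = P^8/2" by (simp add: power_add[symmetric])
    finally show ?thesis .
  qed
  have "(x1 + b)^2 \<le> 2*x1^2 + 2*b^2"
  proof -
    have "0 \<le> (x1 - b)^2" by simp
    then show ?thesis by (simp add: power2_eq_square algebra_simps)
  qed
  moreover have "0 \<le> P^8" by simp
  ultimately have "(x1 + b)^2 \<le> P^8/2" using ux uu bb2 by linarith
  then show "(P*Q/2 + Q^4/R^2)^2 \<le> P^8 / 2" unfolding x1_def b_def .
qed



definition kap :: "(real \<Rightarrow> real \<Rightarrow> complex) \<Rightarrow> real \<Rightarrow> real \<Rightarrow> real" where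
  "kap c t \<theta> = det2 (dth c t \<theta>) (dth (dth c) t \<theta>) / norm (dth c t \<theta>) ^ 3"
definition Df :: "(real \<Rightarrow> real \<Rightarrow> complex) \<Rightarrow> real \<Rightarrow> real \<Rightarrow> real" where
  "Df c t \<theta> = (dth c t \<theta> \<bullet> dth (dt c) t \<theta>) / norm (dth c t \<theta>)"

lemma curv_eq: "curvature (c t) \<theta> = kap c t \<theta>"
  by (simp add: curvature_def kap_def dth_def)

lemma cprod: "(\<lambda>(t,\<theta>). f t \<theta>) = (\<lambda>z. f (fst z) (snd z))"
  by (simp add: case_prod_beta')




definition Lf :: "(real \<Rightarrow> real \<Rightarrow> complex) \<Rightarrow> real \<Rightarrow> real \<Rightarrow> real \<Rightarrow> real" where
  "Lf c p q t = integral {p..q} (\<lambda>\<theta>. norm (dth c t \<theta>))"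
definition Mf :: "(real \<Rightarrow> real \<Rightarrow> complex) \<Rightarrow> real \<Rightarrow> real \<Rightarrow> real \<Rightarrow> complex" where
  "Mf c p q t = integral {p..q} (\<lambda>\<theta>. norm (dth c t \<theta>) *\<^sub>R c t \<theta>)"




definition mf :: "(real \<Rightarrow> real \<Rightarrow> complex) \<Rightarrow> real \<Rightarrow> real \<Rightarrow> real \<Rightarrow> complex" where
  "mf c p q t = inverse (Lf c p q t) *\<^sub>R Mf c p q t"


context
  fixes c :: "real \<Rightarrow> real \<Rightarrow> complex"
  assumes path: "smooth_imm_path c"
begin
lemma js: "jointly_smooth c" using path by (simp add: smooth_imm_path_def)

lemma cont_w: "continuous_on ({0..1} \<times> UNIV) (\<lambda>(t,\<theta>). iter_partial w c t \<theta>)"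
  using js by (simp add: jointly_smooth_def)

lemma dt_w: "t \<in> {0..1} \<Longrightarrow> ((\<lambda>s. iter_partial w c s \<theta>) has_vector_derivative dt (iter_partial w c) t \<theta>) (at t within {0..1})"
  using js by (simp add: jointly_smooth_def)

lemma dth_w: "t \<in> {0..1} \<Longrightarrow> ((\<lambda>x. iter_partial w c t x) has_vector_derivative dth (iter_partial w c) t \<theta>) (at \<theta>)"
  using js by (simp add: jointly_smooth_def)

lemma cont_c: "continuous_on ({0..1} \<times> UNIV) (\<lambda>(t,\<theta>). c t \<theta>)"
  using cont_w[of "[]"] by simp
lemma cont_V: "continuous_on ({0..1} \<times> UNIV) (\<lambda>(t,\<theta>). dt c t \<theta>)"
  using cont_w[of "[True]"] by simp
lemma cont_T: "continuous_on ({0..1} \<times> UNIV) (\<lambda>(t,\<theta>). dth c t \<theta>)"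
  using cont_w[of "[False]"] by simp
lemma cont_W: "continuous_on ({0..1} \<times> UNIV) (\<lambda>(t,\<theta>). dth (dth c) t \<theta>)"
  using cont_w[of "[False,False]"] by simp
lemma cont_Y: "continuous_on ({0..1} \<times> UNIV) (\<lambda>(t,\<theta>). dth (dt c) t \<theta>)"
  using cont_w[of "[False,True]"] by simp

lemma d_c_t: "t \<in> {0..1} \<Longrightarrow> ((\<lambda>s. c s \<theta>) has_vector_derivative dt c t \<theta>) (at t within {0..1})"
  using dt_w[of t "[]"] by simp
lemma d_c_x: "t \<in> {0..1} \<Longrightarrow> ((\<lambda>x. c t x) has_vector_derivative dth c t \<theta>) (at \<theta>)"
  using dth_w[of t "[]"] by simp
lemma d_T_x: "t \<in> {0..1} \<Longrightarrow> ((\<lambda>x. dth c t x) has_vector_derivative dth (dth c) t \<theta>) (at \<theta>)"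
  using dth_w[of t "[False]"] by simp
lemma d_V_x: "t \<in> {0..1} \<Longrightarrow> ((\<lambda>x. dt c t x) has_vector_derivative dth (dt c) t \<theta>) (at \<theta>)"
  using dth_w[of t "[True]"] by simp



lemma T_int:
  assumes t: "t \<in> {0..1}"
  shows "dth c t \<theta> = dth c 0 \<theta> + integral {0..t} (\<lambda>s. dth (dt c) s \<theta>)"
proof -
  have ftc: "c t x = c 0 x + integral {0..t} (\<lambda>s. dt c s x)" for x
  proof -
    have "((\<lambda>s. dt c s x) has_integral (c t x - c 0 x)) {0..t}"
    proof (rule fundamental_theorem_of_calculus)
      show "0 \<le> t" using t by simp
      show "((\<lambda>s. c s x) has_vector_derivative dt c s x) (at s within {0..t})" if "s \<in> {0..t}" for s
        using t that by (auto intro: has_vector_derivative_within_subset[OF d_c_t])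
    qed
    then show ?thesis by (simp add: integral_unique)
  qed
  have G: "((\<lambda>x. integral (cbox 0 t) (\<lambda>s. dt c s x)) has_vector_derivative integral (cbox 0 t) (\<lambda>s. dth (dt c) s \<theta>)) (at \<theta> within UNIV)"
  proof (rule leibniz_rule_vector_derivative)
    show "((\<lambda>x. dt c s x) has_vector_derivative dth (dt c) s x) (at x within UNIV)" if "s \<in> cbox 0 t" for x s
      using d_V_x[of s x] that t by auto
    show "(\<lambda>s. dt c s x) integrable_on cbox 0 t" for x
      using t by (intro integrable_continuous continuous_on_subset[OF cont_slice_t[OF cont_V]]) auto
    show "continuous_on (UNIV \<times> cbox 0 t) (\<lambda>(x, s). dth (dt c) s x)"
      using cont_swap[OF cont_Y, of t 0] t by simp
  qed auto
  have "((\<lambda>x. c 0 x + integral {0..t} (\<lambda>s. dt c s x)) has_vector_derivative dth c 0 \<theta> + integral {0..t} (\<lambda>s. dth (dt c) s \<theta>)) (at \<theta>)"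
    using has_vector_derivative_add[OF d_c_x[of 0 \<theta>] G] by simp
  moreover have "(\<lambda>x. c 0 x + integral {0..t} (\<lambda>s. dt c s x)) = (\<lambda>x. c t x)"
    using ftc by (intro ext) (rule sym)
  ultimately have "((\<lambda>x. c t x) has_vector_derivative dth c 0 \<theta> + integral {0..t} (\<lambda>s. dth (dt c) s \<theta>)) (at \<theta>)"
    by simp
  then show ?thesis using vector_derivative_unique_at[OF d_c_x[OF t]] by blast
qed

lemma d_T_t:
  assumes t: "t \<in> {0..1}"
  shows "((\<lambda>s. dth c s \<theta>) has_vector_derivative dth (dt c) t \<theta>) (at t within {0..1})"
proof -
  have "((\<lambda>s. dth c 0 \<theta> + integral {0..s} (\<lambda>s. dth (dt c) s \<theta>)) has_vector_derivative 0 + dth (dt c) t \<theta>) (at t within {0..1})"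
    by (intro has_vector_derivative_add has_vector_derivative_const integral_has_vector_derivative
        cont_slice_t[OF cont_Y] t)
  then have d: "((\<lambda>s. dth c 0 \<theta> + integral {0..s} (\<lambda>s. dth (dt c) s \<theta>)) has_vector_derivative dth (dt c) t \<theta>) (at t within {0..1})"
    by simp
  show ?thesis
    by (rule has_vector_derivative_transform[OF t _ d]) (erule T_int)
qed




lemma imm: "t \<in> {0..1} \<Longrightarrow> dth c t \<theta> \<noteq> 0"
  using path by (simp add: smooth_imm_path_def)

lemma per: "t \<in> {0..1} \<Longrightarrow> c t (\<theta> + 2*pi) = c t \<theta>"
  using path by (simp add: smooth_imm_path_def)

lemma cT: "continuous_on ({0..1} \<times> UNIV) (\<lambda>z. dth c (fst z) (snd z))" using cont_T by (simp add: cprod)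
lemma cV: "continuous_on ({0..1} \<times> UNIV) (\<lambda>z. dt c (fst z) (snd z))" using cont_V by (simp add: cprod)
lemma cW: "continuous_on ({0..1} \<times> UNIV) (\<lambda>z. dth (dth c) (fst z) (snd z))" using cont_W by (simp add: cprod)
lemma cY: "continuous_on ({0..1} \<times> UNIV) (\<lambda>z. dth (dt c) (fst z) (snd z))" using cont_Y by (simp add: cprod)
lemma cC: "continuous_on ({0..1} \<times> UNIV) (\<lambda>z. c (fst z) (snd z))" using cont_c by (simp add: cprod)

lemma cD: "S \<subseteq> {0..1} \<times> UNIV \<Longrightarrow> continuous_on S (\<lambda>z. Df c (fst z) (snd z))"
  unfolding Df_def
  by (intro continuous_intros continuous_on_subset[OF cT] continuous_on_subset[OF cY])
     (auto simp: imm)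

lemma cK: "S \<subseteq> {0..1} \<times> UNIV \<Longrightarrow> continuous_on S (\<lambda>z. kap c (fst z) (snd z))"
  unfolding kap_def det2_def
  by (intro continuous_intros continuous_on_subset[OF cT] continuous_on_subset[OF cW])
     (auto simp: imm)

context
  assumes horizontal: "\<forall>t\<in>{0..1}. \<forall>\<theta>. dt c t \<theta> \<bullet> dth c t \<theta> = 0"
begin

lemma horiz_d:
  assumes t: "t \<in> {0..1}"
  shows "dth (dt c) t \<theta> \<bullet> dth c t \<theta> + dt c t \<theta> \<bullet> dth (dth c) t \<theta> = 0"
proof -
  have d: "((\<lambda>x. dt c t x \<bullet> dth c t x) has_vector_derivative
      (dt c t \<theta> \<bullet> dth (dth c) t \<theta> + dth (dt c) t \<theta> \<bullet> dth c t \<theta>)) (at \<theta>)"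
    by (rule inner_vd[OF d_V_x[OF t] d_T_x[OF t]])
  have e: "(\<lambda>x. dt c t x \<bullet> dth c t x) = (\<lambda>x. 0)" using horizontal t by auto
  have z: "((\<lambda>x. 0::real) has_vector_derivative 0) (at \<theta>)" by (rule has_vector_derivative_const)
  from d z show ?thesis unfolding e using vector_derivative_unique_at by fastforce
qed

lemma D_abs:
  assumes t: "t \<in> {0..1}"
  shows "\<bar>Df c t \<theta>\<bar> = \<bar>kap c t \<theta>\<bar> * norm (dt c t \<theta>) * norm (dth c t \<theta>)"
proof -
  let ?T = "dth c t \<theta>" and ?V = "dt c t \<theta>" and ?W = "dth (dth c) t \<theta>" and ?Y = "dth (dt c) t \<theta>"
  have T0: "?T \<noteq> 0" by (rule imm[OF t])
  have nT: "norm ?T > 0" using T0 by simp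
  have "?T \<bullet> ?Y = - (?V \<bullet> ?W)" using horiz_d[OF t, of \<theta>] by (simp add: inner_commute)
  then have "\<bar>?T \<bullet> ?Y\<bar> = norm ?V * \<bar>det2 ?T ?W\<bar> / norm ?T"
    using alg_perp[of ?V ?T ?W] horizontal t T0 by simp
  then have "\<bar>Df c t \<theta>\<bar> = norm ?V * \<bar>det2 ?T ?W\<bar> / (norm ?T)^2"
    unfolding Df_def by (simp add: abs_divide power2_eq_square)
  also have "\<dots> = \<bar>kap c t \<theta>\<bar> * norm ?V * norm ?T"
    unfolding kap_def using nT by (simp add: abs_divide power2_eq_square power3_eq_cube field_simps)
  finally show ?thesis .
qed

end



lemma sub01: "t \<in> {0..1} \<Longrightarrow> {t} \<times> S \<subseteq> {0..1} \<times> UNIV" by auto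

lemma cslice:
  fixes f :: "real \<Rightarrow> real \<Rightarrow> 'c::topological_space"
  shows "t \<in> {0..1} \<Longrightarrow> continuous_on ({0..1} \<times> UNIV) (\<lambda>z. f (fst z) (snd z)) \<Longrightarrow> continuous_on S (\<lambda>x. f t x)"
  using cont_slice_x[of f t S] by (simp add: cprod)

lemma int_normT: "t \<in> {0..1} \<Longrightarrow> (\<lambda>\<theta>. norm (dth c t \<theta>)) integrable_on {a..b}"
  by (intro integrable_continuous_interval continuous_intros cslice[OF _ cT])

lemma int_Mi: "t \<in> {0..1} \<Longrightarrow> (\<lambda>\<theta>. norm (dth c t \<theta>) *\<^sub>R c t \<theta>) integrable_on {a..b}"
  by (intro integrable_continuous_interval continuous_intros cslice[OF _ cT] cslice[OF _ cC])

lemma Lf_deriv: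
  assumes t: "t \<in> {0..1}"
  shows "(Lf c p q has_vector_derivative integral {p..q} (Df c t)) (at t within {0..1})"
proof -
  have "((\<lambda>t. integral (cbox p q) (\<lambda>\<theta>. norm (dth c t \<theta>))) has_vector_derivative integral (cbox p q) (Df c t)) (at t within {0..1})"
  proof (rule leibniz_rule_vector_derivative)
    show "((\<lambda>t. norm (dth c t \<theta>)) has_vector_derivative Df c t' \<theta>) (at t' within {0..1})" if "t' \<in> {0..1}" for t' \<theta>
      unfolding Df_def by (rule norm_vd[OF d_T_t[OF that] imm[OF that]])
    show "(\<lambda>\<theta>. norm (dth c t' \<theta>)) integrable_on cbox p q" if "t' \<in> {0..1}" for t'
      using int_normT[OF that] by simp
    show "continuous_on ({0..1} \<times> cbox p q) (\<lambda>(t, \<theta>). Df c t \<theta>)"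
      using cD[of "{0..1} \<times> cbox p q"] by (auto simp: cprod)
  qed (use t in auto)
  then show ?thesis by (simp add: Lf_def[abs_def])
qed

lemma Mf_deriv:
  assumes t: "t \<in> {0..1}"
  shows "(Mf c p q has_vector_derivative integral {p..q} (\<lambda>\<theta>. norm (dth c t \<theta>) *\<^sub>R dt c t \<theta> + Df c t \<theta> *\<^sub>R c t \<theta>)) (at t within {0..1})"
proof -
  have "((\<lambda>t. integral (cbox p q) (\<lambda>\<theta>. norm (dth c t \<theta>) *\<^sub>R c t \<theta>)) has_vector_derivative integral (cbox p q) (\<lambda>\<theta>. norm (dth c t \<theta>) *\<^sub>R dt c t \<theta> + Df c t \<theta> *\<^sub>R c t \<theta>)) (at t within {0..1})"
  proof (rule leibniz_rule_vector_derivative[where fx="\<lambda>t \<theta>. norm (dth c t \<theta>) *\<^sub>R dt c t \<theta> + Df c t \<theta> *\<^sub>R c t \<theta>"])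
    show "((\<lambda>t. norm (dth c t \<theta>) *\<^sub>R c t \<theta>) has_vector_derivative norm (dth c t' \<theta>) *\<^sub>R dt c t' \<theta> + Df c t' \<theta> *\<^sub>R c t' \<theta>) (at t' within {0..1})" if "t' \<in> {0..1}" for t' \<theta>
    proof (rule has_vector_derivative_scaleR)
      show "((\<lambda>t. norm (dth c t \<theta>)) has_field_derivative Df c t' \<theta>) (at t' within {0..1})"
        unfolding Df_def has_real_derivative_iff_has_vector_derivative
        by (rule norm_vd[OF d_T_t[OF that] imm[OF that]])
      show "((\<lambda>t. c t \<theta>) has_vector_derivative dt c t' \<theta>) (at t' within {0..1})"
        by (rule d_c_t[OF that])
    qed
    show "(\<lambda>\<theta>. norm (dth c t' \<theta>) *\<^sub>R c t' \<theta>) integrable_on cbox p q" if "t' \<in> {0..1}" for t'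
      using int_Mi[OF that] by simp
    have "continuous_on ({0..1} \<times> cbox p q) (\<lambda>z. norm (dth c (fst z) (snd z)) *\<^sub>R dt c (fst z) (snd z) + Df c (fst z) (snd z) *\<^sub>R c (fst z) (snd z))"
      by (intro continuous_intros continuous_on_subset[OF cT] continuous_on_subset[OF cV]
          continuous_on_subset[OF cC] cD) auto
    then show "continuous_on ({0..1} \<times> cbox p q) (\<lambda>(t, \<theta>). norm (dth c t \<theta>) *\<^sub>R dt c t \<theta> + Df c t \<theta> *\<^sub>R c t \<theta>)"
      by (simp add: cprod)
  qed (use t in auto)
  then show ?thesis by (simp add: Mf_def[abs_def])
qed

lemma Lf_pos:
  assumes t: "t \<in> {0..1}" and pq: "p < q"
  shows "Lf c p q t > 0"
proof -
  have "continuous_on {p..q} (\<lambda>\<theta>. norm (dth c t \<theta>))"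
    by (intro continuous_intros cslice[OF t cT])
  then obtain x where x: "x \<in> {p..q}" "\<And>y. y \<in> {p..q} \<Longrightarrow> norm (dth c t x) \<le> norm (dth c t y)"
    using continuous_attains_inf[of "{p..q}" "\<lambda>\<theta>. norm (dth c t \<theta>)"] pq by auto
  have m0: "norm (dth c t x) > 0" using imm[OF t] by simp
  have "integral {p..q} (\<lambda>\<theta>. norm (dth c t x)) \<le> Lf c p q t"
    unfolding Lf_def by (rule integral_le) (use x int_normT[OF t] in auto)
  moreover have "integral {p..q} (\<lambda>\<theta>. norm (dth c t x)) = (q - p) * norm (dth c t x)"
    using pq by simp
  moreover have "(q - p) * norm (dth c t x) > 0" using pq m0 by simp
  ultimately show ?thesis by linarith
qed




lemma diam0:
  assumes t: "t \<in> {0..1}" and xy: "p \<le> x" "x \<le> y" "y \<le> q"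
  shows "norm (c t y - c t x) \<le> Lf c p q t"
proof -
  have "((\<lambda>\<theta>. dth c t \<theta>) has_integral (c t y - c t x)) {x..y}"
    by (rule fundamental_theorem_of_calculus) (use xy in \<open>auto intro: has_vector_derivative_at_within d_c_x[OF t]\<close>)
  then have "c t y - c t x = integral {x..y} (\<lambda>\<theta>. dth c t \<theta>)" by (simp add: integral_unique)
  also have "norm \<dots> \<le> integral {x..y} (\<lambda>\<theta>. norm (dth c t \<theta>))"
    by (rule integral_norm_bound_integral)
       (auto intro: integrable_continuous_interval cslice[OF t cT] int_normT[OF t])
  also have "\<dots> \<le> Lf c p q t" unfolding Lf_def
    by (rule integral_subset_le) (use xy in \<open>auto intro: int_normT[OF t]\<close>)
  finally show ?thesis .
qed

lemma diam:
  assumes t: "t \<in> {0..1}" and "x \<in> {p..q}" "y \<in> {p..q}"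
  shows "norm (c t x - c t y) \<le> Lf c p q t"
proof (cases "x \<le> y")
  case True then show ?thesis using diam0[OF t, of p x y q] assms by (simp add: norm_minus_commute)
next
  case False then show ?thesis using diam0[OF t, of p y x q] assms by simp
qed

lemma centroid:
  assumes t: "t \<in> {0..1}" and pq: "p < q" and th: "\<theta> \<in> {p..q}"
  shows "norm (c t \<theta> - inverse (Lf c p q t) *\<^sub>R Mf c p q t) \<le> Lf c p q t"
proof -
  let ?L = "Lf c p q t"
  have L0: "?L > 0" by (rule Lf_pos[OF t pq])
  have i1: "(\<lambda>x. norm (dth c t x) *\<^sub>R c t \<theta>) integrable_on {p..q}"
    by (intro integrable_continuous_interval continuous_intros cslice[OF t cT])
  have eq: "integral {p..q} (\<lambda>x. norm (dth c t x) *\<^sub>R (c t \<theta> - c t x)) = ?L *\<^sub>R c t \<theta> - Mf c p q t"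
  proof -
    have "integral {p..q} (\<lambda>x. norm (dth c t x) *\<^sub>R (c t \<theta> - c t x))
        = integral {p..q} (\<lambda>x. norm (dth c t x) *\<^sub>R c t \<theta> - norm (dth c t x) *\<^sub>R c t x)"
      by (simp add: scaleR_diff_right)
    also have "\<dots> = integral {p..q} (\<lambda>x. norm (dth c t x) *\<^sub>R c t \<theta>) - Mf c p q t"
      unfolding Mf_def by (rule integral_diff[OF i1 int_Mi[OF t]])
    also have "integral {p..q} (\<lambda>x. norm (dth c t x) *\<^sub>R c t \<theta>) = ?L *\<^sub>R c t \<theta>"
      unfolding Lf_def by (rule integral_unique[OF has_integral_scaleR_left[OF integrable_integral[OF int_normT[OF t]]]])
    finally show ?thesis .
  qed
  have "norm (integral {p..q} (\<lambda>x. norm (dth c t x) *\<^sub>R (c t \<theta> - c t x))) \<le> integral {p..q} (\<lambda>x. norm (dth c t x) * ?L)"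
  proof (rule integral_norm_bound_integral)
    show "(\<lambda>x. norm (dth c t x) *\<^sub>R (c t \<theta> - c t x)) integrable_on {p..q}"
      by (intro integrable_continuous_interval continuous_intros cslice[OF t cT] cslice[OF t cC])
    show "(\<lambda>x. norm (dth c t x) * ?L) integrable_on {p..q}"
      using int_normT[OF t] by (rule integrable_on_mult_left)
    show "norm (norm (dth c t x) *\<^sub>R (c t \<theta> - c t x)) \<le> norm (dth c t x) * ?L" if "x \<in> {p..q}" for x
      using diam[OF t th that] by (simp add: mult_left_mono)
  qed
  also have "\<dots> = ?L * ?L" unfolding Lf_def by simp
  finally have n: "norm (?L *\<^sub>R c t \<theta> - Mf c p q t) \<le> ?L * ?L" using eq by simp
  have "c t \<theta> - inverse ?L *\<^sub>R Mf c p q t = inverse ?L *\<^sub>R (?L *\<^sub>R c t \<theta> - Mf c p q t)"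
    using L0 by (simp add: scaleR_diff_right)
  then have "norm (c t \<theta> - inverse ?L *\<^sub>R Mf c p q t) = inverse ?L * norm (?L *\<^sub>R c t \<theta> - Mf c p q t)"
    using L0 by simp
  also have "\<dots> \<le> inverse ?L * (?L * ?L)" using n L0 by (simp add: mult_left_mono)
  also have "\<dots> = ?L" using L0 by simp
  finally show ?thesis .
qed




lemma cK0: "continuous_on ({0..1} \<times> UNIV) (\<lambda>z. kap c (fst z) (snd z))" by (rule cK) simp
lemma cD0: "continuous_on ({0..1} \<times> UNIV) (\<lambda>z. Df c (fst z) (snd z))" by (rule cD) simp

context
  fixes A \<epsilon> p q :: real
  assumes A_pos: "A > 0" and eps_pos: "\<epsilon> > 0"
    and horizontal: "\<forall>t\<in>{0..1}. \<forall>\<theta>. dt c t \<theta> \<bullet> dth c t \<theta> = 0"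
    and energy: "\<forall>t\<in>{0..1}. integral {0..2*pi}
        (\<lambda>\<theta>. (1 + A * (curvature (c t) \<theta>)\<^sup>2) * (norm (dt c t \<theta>))\<^sup>2 * norm (dth c t \<theta>)) = \<epsilon>\<^sup>2"
    and pq: "0 \<le> p" "p < q" "q \<le> 2*pi"
begin

lemma cE: "t \<in> {0..1} \<Longrightarrow> continuous_on S (\<lambda>\<theta>. (1 + A * (kap c t \<theta>)\<^sup>2) * (norm (dt c t \<theta>))\<^sup>2 * norm (dth c t \<theta>))"
  by (intro continuous_intros cslice[OF _ cK0] cslice[OF _ cV] cslice[OF _ cT])

lemma Eint:
  assumes t: "t \<in> {0..1}"
  shows "integral {p..q} (\<lambda>\<theta>. (1 + A * (kap c t \<theta>)\<^sup>2) * (norm (dt c t \<theta>))\<^sup>2 * norm (dth c t \<theta>)) \<le> \<epsilon>\<^sup>2"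
proof -
  have "integral {p..q} (\<lambda>\<theta>. (1 + A * (kap c t \<theta>)\<^sup>2) * (norm (dt c t \<theta>))\<^sup>2 * norm (dth c t \<theta>))
     \<le> integral {0..2*pi} (\<lambda>\<theta>. (1 + A * (kap c t \<theta>)\<^sup>2) * (norm (dt c t \<theta>))\<^sup>2 * norm (dth c t \<theta>))"
  proof (rule integral_subset_le)
    show "{p..q} \<subseteq> {0..2*pi}" using pq by auto
  qed (use A_pos in \<open>auto intro!: integrable_continuous_interval cE[OF t]\<close>)
  also have "\<dots> = \<epsilon>\<^sup>2" using energy t by (simp add: curv_eq)
  finally show ?thesis .
qed

lemma b1:
  assumes t: "t \<in> {0..1}"
  shows "integral {p..q} (\<lambda>\<theta>. norm (dt c t \<theta>) * norm (dth c t \<theta>)) \<le> \<epsilon> * sqrt (Lf c p q t)"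
proof -
  have "integral {p..q} (\<lambda>\<theta>. norm (dt c t \<theta>) * norm (dth c t \<theta>)) \<le> sqrt (\<epsilon>\<^sup>2 * Lf c p q t)"
  proof (rule int_amgm[where f="\<lambda>\<theta>. (norm (dt c t \<theta>))\<^sup>2 * norm (dth c t \<theta>)" and g="\<lambda>\<theta>. norm (dth c t \<theta>)"])
    show "(\<lambda>\<theta>. norm (dt c t \<theta>) * norm (dth c t \<theta>)) integrable_on {p..q}"
      by (intro integrable_continuous_interval continuous_intros cslice[OF t cV] cslice[OF t cT])
    show "(\<lambda>\<theta>. (norm (dt c t \<theta>))\<^sup>2 * norm (dth c t \<theta>)) integrable_on {p..q}"
      by (intro integrable_continuous_interval continuous_intros cslice[OF t cV] cslice[OF t cT])
    show "(\<lambda>\<theta>. norm (dth c t \<theta>)) integrable_on {p..q}" by (rule int_normT[OF t])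
    show "(norm (dt c t x) * norm (dth c t x))\<^sup>2 \<le> (norm (dt c t x))\<^sup>2 * norm (dth c t x) * norm (dth c t x)" for x
      by (simp add: power2_eq_square)
    show "integral {p..q} (\<lambda>\<theta>. (norm (dt c t \<theta>))\<^sup>2 * norm (dth c t \<theta>)) \<le> \<epsilon>\<^sup>2"
    proof -
      have "integral {p..q} (\<lambda>\<theta>. (norm (dt c t \<theta>))\<^sup>2 * norm (dth c t \<theta>))
          \<le> integral {p..q} (\<lambda>\<theta>. (1 + A * (kap c t \<theta>)\<^sup>2) * (norm (dt c t \<theta>))\<^sup>2 * norm (dth c t \<theta>))"
      proof (rule integral_le)
        show "(\<lambda>\<theta>. (norm (dt c t \<theta>))\<^sup>2 * norm (dth c t \<theta>)) integrable_on {p..q}"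
          by (intro integrable_continuous_interval continuous_intros cslice[OF t cV] cslice[OF t cT])
        show "(\<lambda>\<theta>. (1 + A * (kap c t \<theta>)\<^sup>2) * (norm (dt c t \<theta>))\<^sup>2 * norm (dth c t \<theta>)) integrable_on {p..q}"
          by (intro integrable_continuous_interval cE[OF t])
        show "(norm (dt c t x))\<^sup>2 * norm (dth c t x) \<le> (1 + A * (kap c t x)\<^sup>2) * (norm (dt c t x))\<^sup>2 * norm (dth c t x)" for x
        proof -
          have "0 \<le> A * (kap c t x)\<^sup>2 * ((norm (dt c t x))\<^sup>2 * norm (dth c t x))" using A_pos by simp
          then show ?thesis by (simp add: algebra_simps)
        qed
      qed
      also have "\<dots> \<le> \<epsilon>\<^sup>2" by (rule Eint[OF t])
      finally show ?thesis .
    qed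
    show "0 < \<epsilon>\<^sup>2" using eps_pos by simp
    show "0 < Lf c p q t" using Lf_pos[OF t pq(2)] .
  qed (auto simp: Lf_def)
  also have "\<dots> = \<epsilon> * sqrt (Lf c p q t)" using eps_pos by (simp add: real_sqrt_mult)
  finally show ?thesis .
qed

lemma b2:
  assumes t: "t \<in> {0..1}"
  shows "integral {p..q} (\<lambda>\<theta>. \<bar>kap c t \<theta>\<bar> * norm (dt c t \<theta>) * norm (dth c t \<theta>)) \<le> \<epsilon> / sqrt A * sqrt (Lf c p q t)"
proof -
  have "integral {p..q} (\<lambda>\<theta>. \<bar>kap c t \<theta>\<bar> * norm (dt c t \<theta>) * norm (dth c t \<theta>)) \<le> sqrt (\<epsilon>\<^sup>2 / A * Lf c p q t)"
  proof (rule int_amgm[where f="\<lambda>\<theta>. (kap c t \<theta>)\<^sup>2 * (norm (dt c t \<theta>))\<^sup>2 * norm (dth c t \<theta>)" and g="\<lambda>\<theta>. norm (dth c t \<theta>)"])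
    show "(\<lambda>\<theta>. \<bar>kap c t \<theta>\<bar> * norm (dt c t \<theta>) * norm (dth c t \<theta>)) integrable_on {p..q}"
      by (intro integrable_continuous_interval continuous_intros cslice[OF t cK0] cslice[OF t cV] cslice[OF t cT])
    show "(\<lambda>\<theta>. (kap c t \<theta>)\<^sup>2 * (norm (dt c t \<theta>))\<^sup>2 * norm (dth c t \<theta>)) integrable_on {p..q}"
      by (intro integrable_continuous_interval continuous_intros cslice[OF t cK0] cslice[OF t cV] cslice[OF t cT])
    show "(\<lambda>\<theta>. norm (dth c t \<theta>)) integrable_on {p..q}" by (rule int_normT[OF t])
    show "(\<bar>kap c t x\<bar> * norm (dt c t x) * norm (dth c t x))\<^sup>2 \<le> (kap c t x)\<^sup>2 * (norm (dt c t x))\<^sup>2 * norm (dth c t x) * norm (dth c t x)" for x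
      by (cases "kap c t x \<ge> 0") (simp_all add: power2_eq_square algebra_simps)
    show "integral {p..q} (\<lambda>\<theta>. (kap c t \<theta>)\<^sup>2 * (norm (dt c t \<theta>))\<^sup>2 * norm (dth c t \<theta>)) \<le> \<epsilon>\<^sup>2 / A"
    proof -
      have "integral {p..q} (\<lambda>\<theta>. (kap c t \<theta>)\<^sup>2 * (norm (dt c t \<theta>))\<^sup>2 * norm (dth c t \<theta>))
          \<le> integral {p..q} (\<lambda>\<theta>. (1 + A * (kap c t \<theta>)\<^sup>2) * (norm (dt c t \<theta>))\<^sup>2 * norm (dth c t \<theta>) / A)"
      proof (rule integral_le)
        show "(\<lambda>\<theta>. (kap c t \<theta>)\<^sup>2 * (norm (dt c t \<theta>))\<^sup>2 * norm (dth c t \<theta>)) integrable_on {p..q}"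
          by (intro integrable_continuous_interval continuous_intros cslice[OF t cK0] cslice[OF t cV] cslice[OF t cT])
        show "(\<lambda>\<theta>. (1 + A * (kap c t \<theta>)\<^sup>2) * (norm (dt c t \<theta>))\<^sup>2 * norm (dth c t \<theta>) / A) integrable_on {p..q}"
          by (intro integrable_continuous_interval continuous_intros cslice[OF t cK0] cslice[OF t cV] cslice[OF t cT]) (use A_pos in auto)
        show "(kap c t x)\<^sup>2 * (norm (dt c t x))\<^sup>2 * norm (dth c t x) \<le> (1 + A * (kap c t x)\<^sup>2) * (norm (dt c t x))\<^sup>2 * norm (dth c t x) / A" for x
        proof -
          have "0 \<le> (norm (dt c t x))\<^sup>2 * norm (dth c t x) / A" using A_pos by simp
          then show ?thesis using A_pos by (simp add: field_simps)
        qed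
      qed
      also have "\<dots> = integral {p..q} (\<lambda>\<theta>. (1 + A * (kap c t \<theta>)\<^sup>2) * (norm (dt c t \<theta>))\<^sup>2 * norm (dth c t \<theta>)) / A"
        by simp
      also have "\<dots> \<le> \<epsilon>\<^sup>2 / A" using Eint[OF t] A_pos by (simp add: divide_right_mono)
      finally show ?thesis .
    qed
    show "0 < \<epsilon>\<^sup>2 / A" using eps_pos A_pos by simp
    show "0 < Lf c p q t" using Lf_pos[OF t pq(2)] .
  qed (auto simp: Lf_def)
  also have "\<dots> = \<epsilon> / sqrt A * sqrt (Lf c p q t)" using eps_pos A_pos by (simp add: real_sqrt_mult real_sqrt_divide)
  finally show ?thesis .
qed


lemma iD: "t \<in> {0..1} \<Longrightarrow> (Df c t) integrable_on {a..b}"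
  using integrable_continuous_interval[OF cslice[OF _ cD0]] by blast

lemma Lder_bound:
  assumes t: "t \<in> {0..1}"
  shows "\<bar>integral {p..q} (Df c t)\<bar> \<le> \<epsilon> / sqrt A * sqrt (Lf c p q t)"
proof -
  have "norm (integral {p..q} (Df c t)) \<le> integral {p..q} (\<lambda>\<theta>. \<bar>kap c t \<theta>\<bar> * norm (dt c t \<theta>) * norm (dth c t \<theta>))"
  proof (rule integral_norm_bound_integral)
    show "Df c t integrable_on {p..q}" by (rule iD[OF t])
    show "(\<lambda>\<theta>. \<bar>kap c t \<theta>\<bar> * norm (dt c t \<theta>) * norm (dth c t \<theta>)) integrable_on {p..q}"
      by (intro integrable_continuous_interval continuous_intros cslice[OF t cK0] cslice[OF t cV] cslice[OF t cT])
    show "norm (Df c t x) \<le> \<bar>kap c t x\<bar> * norm (dt c t x) * norm (dth c t x)" for x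
      using D_abs[OF horizontal t, of x] by simp
  qed
  then show ?thesis using b2[OF t] by simp
qed

lemma m_deriv:
  assumes t: "t \<in> {0..1}"
  shows "(mf c p q has_vector_derivative
     (inverse (Lf c p q t) *\<^sub>R integral {p..q} (\<lambda>\<theta>. norm (dth c t \<theta>) *\<^sub>R dt c t \<theta> + Df c t \<theta> *\<^sub>R c t \<theta>)
      + (- (inverse (Lf c p q t) * integral {p..q} (Df c t) * inverse (Lf c p q t))) *\<^sub>R Mf c p q t)) (at t within {0..1})"
proof -
  have L: "(Lf c p q has_field_derivative integral {p..q} (Df c t)) (at t within {0..1})"
    using Lf_deriv[OF t] by (simp add: has_real_derivative_iff_has_vector_derivative)
  have L0: "Lf c p q t \<noteq> 0" using Lf_pos[OF t pq(2)] by simp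
  show ?thesis unfolding mf_def[abs_def]
    by (rule has_vector_derivative_scaleR[OF DERIV_inverse'[OF L L0] Mf_deriv[OF t]])
qed

lemma m'_bound:
  assumes t: "t \<in> {0..1}"
  shows "norm (inverse (Lf c p q t) *\<^sub>R integral {p..q} (\<lambda>\<theta>. norm (dth c t \<theta>) *\<^sub>R dt c t \<theta> + Df c t \<theta> *\<^sub>R c t \<theta>)
      + (- (inverse (Lf c p q t) * integral {p..q} (Df c t) * inverse (Lf c p q t))) *\<^sub>R Mf c p q t)
    \<le> \<epsilon> / sqrt A * sqrt (Lf c p q t) + \<epsilon> / sqrt (Lf c p q t)"
proof -
  let ?L = "Lf c p q t" and ?L' = "integral {p..q} (Df c t)" and ?M = "Mf c p q t"
  let ?M' = "integral {p..q} (\<lambda>\<theta>. norm (dth c t \<theta>) *\<^sub>R dt c t \<theta> + Df c t \<theta> *\<^sub>R c t \<theta>)"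
  let ?m = "mf c p q t"
  have L0: "?L > 0" using Lf_pos[OF t pq(2)] .
  have iM': "(\<lambda>\<theta>. norm (dth c t \<theta>) *\<^sub>R dt c t \<theta> + Df c t \<theta> *\<^sub>R c t \<theta>) integrable_on {p..q}"
    by (intro integrable_continuous_interval continuous_intros cslice[OF t cD0] cslice[OF t cV] cslice[OF t cT] cslice[OF t cC])
  have iDm: "(\<lambda>\<theta>. Df c t \<theta> *\<^sub>R ?m) integrable_on {p..q}"
    by (intro integrable_continuous_interval continuous_intros cslice[OF t cD0])
  have e1: "?L' *\<^sub>R ?m = integral {p..q} (\<lambda>\<theta>. Df c t \<theta> *\<^sub>R ?m)"
    by (rule integral_unique[OF has_integral_scaleR_left[OF integrable_integral[OF iD[OF t]]], symmetric])
  have e2: "?M' - ?L' *\<^sub>R ?m = integral {p..q} (\<lambda>\<theta>. norm (dth c t \<theta>) *\<^sub>R dt c t \<theta> + Df c t \<theta> *\<^sub>R (c t \<theta> - ?m))"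
    unfolding e1 integral_diff[OF iM' iDm, symmetric] by (simp add: scaleR_diff_right algebra_simps)
  have e3: "inverse ?L *\<^sub>R ?M' + (- (inverse ?L * ?L' * inverse ?L)) *\<^sub>R ?M = inverse ?L *\<^sub>R (?M' - ?L' *\<^sub>R ?m)"
    unfolding mf_def by (simp add: scaleR_diff_right algebra_simps)
  have n: "norm (integral {p..q} (\<lambda>\<theta>. norm (dth c t \<theta>) *\<^sub>R dt c t \<theta> + Df c t \<theta> *\<^sub>R (c t \<theta> - ?m)))
      \<le> integral {p..q} (\<lambda>\<theta>. norm (dt c t \<theta>) * norm (dth c t \<theta>) + ?L * (\<bar>kap c t \<theta>\<bar> * norm (dt c t \<theta>) * norm (dth c t \<theta>)))"
  proof (rule integral_norm_bound_integral)
    show "(\<lambda>\<theta>. norm (dth c t \<theta>) *\<^sub>R dt c t \<theta> + Df c t \<theta> *\<^sub>R (c t \<theta> - ?m)) integrable_on {p..q}"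
      by (intro integrable_continuous_interval continuous_intros cslice[OF t cD0] cslice[OF t cV] cslice[OF t cT] cslice[OF t cC])
    show "(\<lambda>\<theta>. norm (dt c t \<theta>) * norm (dth c t \<theta>) + ?L * (\<bar>kap c t \<theta>\<bar> * norm (dt c t \<theta>) * norm (dth c t \<theta>))) integrable_on {p..q}"
      by (intro integrable_continuous_interval continuous_intros cslice[OF t cK0] cslice[OF t cV] cslice[OF t cT])
    show "norm (norm (dth c t x) *\<^sub>R dt c t x + Df c t x *\<^sub>R (c t x - ?m))
        \<le> norm (dt c t x) * norm (dth c t x) + ?L * (\<bar>kap c t x\<bar> * norm (dt c t x) * norm (dth c t x))" if x: "x \<in> {p..q}" for x
    proof -
      have "norm (norm (dth c t x) *\<^sub>R dt c t x + Df c t x *\<^sub>R (c t x - ?m))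
          \<le> norm (norm (dth c t x) *\<^sub>R dt c t x) + norm (Df c t x *\<^sub>R (c t x - ?m))" by (rule norm_triangle_ineq)
      also have "norm (norm (dth c t x) *\<^sub>R dt c t x) = norm (dt c t x) * norm (dth c t x)" by simp
      also have "norm (Df c t x *\<^sub>R (c t x - ?m)) = \<bar>Df c t x\<bar> * norm (c t x - ?m)" by simp
      also have "\<dots> \<le> \<bar>Df c t x\<bar> * ?L"
        using centroid[OF t pq(2) x] by (intro mult_left_mono) (auto simp: mf_def)
      also have "\<dots> = ?L * (\<bar>kap c t x\<bar> * norm (dt c t x) * norm (dth c t x))"
        using D_abs[OF horizontal t, of x] by simp
      finally show ?thesis by simp
    qed
  qed
  also have "\<dots> = integral {p..q} (\<lambda>\<theta>. norm (dt c t \<theta>) * norm (dth c t \<theta>)) + ?L * integral {p..q} (\<lambda>\<theta>. \<bar>kap c t \<theta>\<bar> * norm (dt c t \<theta>) * norm (dth c t \<theta>))"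
  proof -
    have a: "(\<lambda>\<theta>. norm (dt c t \<theta>) * norm (dth c t \<theta>)) integrable_on {p..q}"
      by (intro integrable_continuous_interval continuous_intros cslice[OF t cV] cslice[OF t cT])
    have b: "(\<lambda>\<theta>. ?L * (\<bar>kap c t \<theta>\<bar> * norm (dt c t \<theta>) * norm (dth c t \<theta>))) integrable_on {p..q}"
      by (intro integrable_continuous_interval continuous_intros cslice[OF t cK0] cslice[OF t cV] cslice[OF t cT])
    show ?thesis using integral_add[OF a b] by simp
  qed
  also have "\<dots> \<le> \<epsilon> * sqrt ?L + ?L * (\<epsilon> / sqrt A * sqrt ?L)"
    using b1[OF t] b2[OF t] L0 by (intro add_mono mult_left_mono) auto
  finally have n2: "norm (?M' - ?L' *\<^sub>R ?m) \<le> \<epsilon> * sqrt ?L + ?L * (\<epsilon> / sqrt A * sqrt ?L)"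
    using e2 by simp
  have "norm (inverse ?L *\<^sub>R ?M' + (- (inverse ?L * ?L' * inverse ?L)) *\<^sub>R ?M) = inverse ?L * norm (?M' - ?L' *\<^sub>R ?m)"
    unfolding e3 using L0 by simp
  also have "\<dots> \<le> inverse ?L * (\<epsilon> * sqrt ?L + ?L * (\<epsilon> / sqrt A * sqrt ?L))"
    using n2 L0 by (intro mult_left_mono) auto
  also have "\<dots> = \<epsilon> / sqrt A * sqrt ?L + \<epsilon> / sqrt ?L"
  proof -
    have s: "sqrt ?L * sqrt ?L = ?L" "sqrt ?L > 0" using L0 by auto
    show ?thesis using L0 s by (simp add: field_simps)
  qed
  finally show ?thesis .
qed

lemma S_deriv:
  assumes t: "t \<in> {0..1}"
  shows "((\<lambda>t. sqrt (Lf c p q t)) has_vector_derivative (inverse (sqrt (Lf c p q t)) / 2 * integral {p..q} (Df c t))) (at t within {0..1})"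
proof -
  have L: "(Lf c p q has_field_derivative integral {p..q} (Df c t)) (at t within {0..1})"
    using Lf_deriv[OF t] by (simp add: has_real_derivative_iff_has_vector_derivative)
  have L0: "Lf c p q t > 0" using Lf_pos[OF t pq(2)] .
  have "((\<lambda>t. sqrt (Lf c p q t)) has_field_derivative (inverse (sqrt (Lf c p q t)) / 2 * integral {p..q} (Df c t))) (at t within {0..1})"
    by (rule DERIV_chain2[OF DERIV_real_sqrt[OF L0] L])
  then show ?thesis by (simp add: has_real_derivative_iff_has_vector_derivative)
qed

lemma S_bound:
  assumes t: "t \<in> {0..1}"
  shows "\<bar>sqrt (Lf c p q t) - sqrt (Lf c p q 0)\<bar> \<le> \<epsilon> / sqrt A / 2"
proof -
  have "norm (sqrt (Lf c p q t) - sqrt (Lf c p q 0)) \<le> \<epsilon> / sqrt A / 2 * \<bar>t - 0\<bar>"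
  proof (rule vd_bound[where f="\<lambda>t. sqrt (Lf c p q t)" and a=0 and b=1])
    show "((\<lambda>t. sqrt (Lf c p q t)) has_vector_derivative (inverse (sqrt (Lf c p q x)) / 2 * integral {p..q} (Df c x))) (at x within {0..1})"
      if "x \<in> {0..1}" for x by (rule S_deriv[OF that])
    show "norm (inverse (sqrt (Lf c p q x)) / 2 * integral {p..q} (Df c x)) \<le> \<epsilon> / sqrt A / 2" if x: "x \<in> {0..1}" for x
    proof -
      have L0: "sqrt (Lf c p q x) > 0" using Lf_pos[OF x pq(2)] by simp
      have "norm (inverse (sqrt (Lf c p q x)) / 2 * integral {p..q} (Df c x)) = inverse (sqrt (Lf c p q x)) / 2 * \<bar>integral {p..q} (Df c x)\<bar>"
        using L0 by (simp add: abs_mult)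
      also have "\<dots> \<le> inverse (sqrt (Lf c p q x)) / 2 * (\<epsilon> / sqrt A * sqrt (Lf c p q x))"
        using Lder_bound[OF x] L0 by (intro mult_left_mono) auto
      also have "\<dots> = \<epsilon> / sqrt A / 2" using L0 by (simp add: field_simps)
      finally show ?thesis .
    qed
  qed (use t in auto)
  moreover have "\<epsilon> / sqrt A / 2 * \<bar>t - 0\<bar> \<le> \<epsilon> / sqrt A / 2"
    using t eps_pos A_pos by (intro mult_right_le_one_le) auto
  ultimately show ?thesis by (simp only: real_norm_def)
qed

lemma displacement:
  assumes th: "\<theta> \<in> {p..q}" and big: "\<epsilon> / sqrt A / 2 < sqrt (Lf c p q 0)"
  shows "norm (c 0 \<theta> - c 1 \<theta>) \<le> (sqrt (Lf c p q 0))\<^sup>2 + (sqrt (Lf c p q 0) + \<epsilon> / sqrt A / 2)\<^sup>2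
     + (\<epsilon> / sqrt A * (sqrt (Lf c p q 0) + \<epsilon> / sqrt A / 2) + \<epsilon> / (sqrt (Lf c p q 0) - \<epsilon> / sqrt A / 2))"
proof -
  let ?x = "sqrt (Lf c p q 0)" and ?h = "\<epsilon> / sqrt A / 2" and ?b = "\<epsilon> / sqrt A"
  let ?B = "?b * (?x + ?h) + \<epsilon> / (?x - ?h)"
  have Sb: "?x - ?h \<le> sqrt (Lf c p q t) \<and> sqrt (Lf c p q t) \<le> ?x + ?h" if "t \<in> {0..1}" for t
    using S_bound[OF that] by linarith
  have bpos: "?b \<ge> 0" using eps_pos A_pos by simp
  have mb: "norm (mf c p q 1 - mf c p q 0) \<le> ?B * \<bar>1 - 0\<bar>"
  proof (rule vd_bound[where a=0 and b=1])
    show "(mf c p q has_vector_derivative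
     (inverse (Lf c p q x) *\<^sub>R integral {p..q} (\<lambda>\<theta>. norm (dth c x \<theta>) *\<^sub>R dt c x \<theta> + Df c x \<theta> *\<^sub>R c x \<theta>)
      + (- (inverse (Lf c p q x) * integral {p..q} (Df c x) * inverse (Lf c p q x))) *\<^sub>R Mf c p q x)) (at x within {0..1})"
      if "x \<in> {0..1}" for x by (rule m_deriv[OF that])
    show "norm (inverse (Lf c p q x) *\<^sub>R integral {p..q} (\<lambda>\<theta>. norm (dth c x \<theta>) *\<^sub>R dt c x \<theta> + Df c x \<theta> *\<^sub>R c x \<theta>)
      + (- (inverse (Lf c p q x) * integral {p..q} (Df c x) * inverse (Lf c p q x))) *\<^sub>R Mf c p q x) \<le> ?B"
      if x: "x \<in> {0..1}" for x
    proof -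
      have s1: "?x - ?h \<le> sqrt (Lf c p q x)" "sqrt (Lf c p q x) \<le> ?x + ?h" using Sb[OF x] by auto
      have p1: "?x - ?h > 0" using big by simp
      have "?b * sqrt (Lf c p q x) \<le> ?b * (?x + ?h)" using s1 bpos by (intro mult_left_mono) auto
      moreover have "\<epsilon> / sqrt (Lf c p q x) \<le> \<epsilon> / (?x - ?h)"
      proof -
        have q0: "sqrt (Lf c p q x) > 0" using s1 p1 by linarith
        have "0 < sqrt (Lf c p q x) * (?x - ?h)" using q0 p1 by (rule mult_pos_pos)
        then show ?thesis using s1 p1 eps_pos by (intro divide_left_mono) auto
      qed
      ultimately show ?thesis using m'_bound[OF x] by linarith
    qed
  qed auto
  have c0: "norm (c 0 \<theta> - mf c p q 0) \<le> Lf c p q 0" using centroid[OF _ pq(2) th, of 0] by (simp add: mf_def)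
  have c1: "norm (c 1 \<theta> - mf c p q 1) \<le> Lf c p q 1" using centroid[OF _ pq(2) th, of 1] by (simp add: mf_def)
  have P0: "Lf c p q 0 > 0" "Lf c p q 1 > 0" by (rule Lf_pos, use pq in auto)+
  have L0: "Lf c p q 0 = ?x\<^sup>2" using P0 by simp
  have L1: "Lf c p q 1 \<le> (?x + ?h)\<^sup>2"
  proof -
    have a: "sqrt (Lf c p q 1) \<le> ?x + ?h" using Sb[of 1] by auto
    have nn: "0 \<le> Lf c p q 1" using P0(2) by (rule less_imp_le)
    have b: "0 \<le> sqrt (Lf c p q 1)" using nn by (rule real_sqrt_ge_zero)
    have "(sqrt (Lf c p q 1))\<^sup>2 \<le> (?x + ?h)\<^sup>2" using a b by (rule power_mono)
    moreover have "(sqrt (Lf c p q 1))\<^sup>2 = Lf c p q 1" using nn by (rule real_sqrt_pow2)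
    ultimately show ?thesis by simp
  qed
  have eq: "c 0 \<theta> - c 1 \<theta> = ((c 0 \<theta> - mf c p q 0) - (mf c p q 1 - mf c p q 0)) + (mf c p q 1 - c 1 \<theta>)"
    by simp
  have t1: "norm (c 0 \<theta> - c 1 \<theta>) \<le> norm ((c 0 \<theta> - mf c p q 0) - (mf c p q 1 - mf c p q 0)) + norm (mf c p q 1 - c 1 \<theta>)"
    unfolding eq by (rule norm_triangle_ineq)
  have t2: "norm ((c 0 \<theta> - mf c p q 0) - (mf c p q 1 - mf c p q 0)) \<le> norm (c 0 \<theta> - mf c p q 0) + norm (mf c p q 1 - mf c p q 0)"
    by (rule norm_triangle_ineq4)
  have t3: "norm (mf c p q 1 - c 1 \<theta>) = norm (c 1 \<theta> - mf c p q 1)" by (rule norm_minus_commute)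
  have mb': "norm (mf c p q 1 - mf c p q 0) \<le> ?B" using mb by simp
  show ?thesis using t1 t2 t3 mb' c0 c1 L0 L1 by linarith
qed
end


lemma per_nat: "t \<in> {0..1} \<Longrightarrow> c t (x + 2*pi* real n) = c t x"
proof (induction n)
  case 0 then show ?case by simp
next
  case (Suc n)
  have "c t (x + 2*pi* real (Suc n)) = c t ((x + 2*pi* real n) + 2*pi)" by (simp add: algebra_simps)
  also have "\<dots> = c t (x + 2*pi* real n)" by (rule per[OF Suc.prems])
  finally show ?case using Suc by simp
qed

lemma per_red:
  assumes t: "t \<in> {0..1}"
  shows "c t \<theta> = c t (\<theta> - 2*pi * of_int \<lfloor>\<theta>/(2*pi)\<rfloor>)"
proof (cases "\<lfloor>\<theta>/(2*pi)\<rfloor> \<ge> 0")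
  case True
  then have "of_int \<lfloor>\<theta>/(2*pi)\<rfloor> = real (nat \<lfloor>\<theta>/(2*pi)\<rfloor>)" by simp
  then have "\<theta> = (\<theta> - 2*pi * of_int \<lfloor>\<theta>/(2*pi)\<rfloor>) + 2*pi* real (nat \<lfloor>\<theta>/(2*pi)\<rfloor>)" by simp
  then show ?thesis using per_nat[OF t, of "\<theta> - 2*pi * of_int \<lfloor>\<theta>/(2*pi)\<rfloor>" "nat \<lfloor>\<theta>/(2*pi)\<rfloor>"] by metis
next
  case False
  then have k: "0 \<le> - \<lfloor>\<theta>/(2*pi)\<rfloor>" by linarith
  have "real (nat (- \<lfloor>\<theta>/(2*pi)\<rfloor>)) = of_int (- \<lfloor>\<theta>/(2*pi)\<rfloor>)" by (rule of_nat_nat[OF k])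
  then have e: "real (nat (- \<lfloor>\<theta>/(2*pi)\<rfloor>)) = - of_int \<lfloor>\<theta>/(2*pi)\<rfloor>" by simp
  have "\<theta> - 2*pi * of_int \<lfloor>\<theta>/(2*pi)\<rfloor> = \<theta> + 2*pi* real (nat (- \<lfloor>\<theta>/(2*pi)\<rfloor>))"
    unfolding e by simp
  then show ?thesis using per_nat[OF t, of \<theta> "nat (- \<lfloor>\<theta>/(2*pi)\<rfloor>)"] by metis
qed

end

lemma red_range: "0 \<le> \<theta> - 2*pi * of_int \<lfloor>\<theta>/(2*pi)\<rfloor> \<and> \<theta> - 2*pi * of_int \<lfloor>\<theta>/(2*pi)\<rfloor> \<le> 2*pi"
proof -
  have a: "of_int \<lfloor>\<theta>/(2*pi)\<rfloor> \<le> \<theta>/(2*pi)" by (rule of_int_floor_le)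
  have b: "\<theta>/(2*pi) < of_int \<lfloor>\<theta>/(2*pi)\<rfloor> + 1" by (rule real_of_int_floor_add_one_gt)
  have pp: "2*pi > 0" by simp
  have "2*pi * of_int \<lfloor>\<theta>/(2*pi)\<rfloor> \<le> \<theta>" using mult_left_mono[OF a, of "2*pi"] pp by simp
  moreover have "\<theta> < 2*pi*(of_int \<lfloor>\<theta>/(2*pi)\<rfloor> + 1)" using mult_strict_left_mono[OF b pp] pp by simp
  ultimately show ?thesis by (simp add: algebra_simps)
qed

theorem proposition3p5:
  fixes c :: "real \<Rightarrow> real \<Rightarrow> complex" and A \<epsilon> :: real
  assumes A_pos: "A > 0"
    and path: "smooth_imm_path c"
    and const_speed: "\<forall>\<theta>. norm (dth c 0 \<theta>) = curve_length (c 0) / (2*pi)"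
    and eps_pos: "0 < \<epsilon>"
    and eps_small: "\<epsilon> < min (2 * sqrt (A * curve_length (c 0))) (curve_length (c 0) powr (3/2)) / 8"
    and horizontal: "\<forall>t\<in>{0..1}. \<forall>\<theta>. dt c t \<theta> \<bullet> dth c t \<theta> = 0"
    and energy: "\<forall>t\<in>{0..1}. integral {0..2*pi}
        (\<lambda>\<theta>. (1 + A * (curvature (c t) \<theta>)\<^sup>2) * (norm (dt c t \<theta>))\<^sup>2 * norm (dth c t \<theta>)) = \<epsilon>\<^sup>2"
  shows "\<forall>\<theta>. norm (c 0 \<theta> - c 1 \<theta>)
    \<le> 4 * (curve_length (c 0) powr (3/4) * A powr (-1/4) + curve_length (c 0) powr (1/4)) * sqrt \<epsilon>"
proof
  fix \<theta>
  define l where "l = curve_length (c 0)"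
  define lam where "lam = l / (2*pi)"
  have lam_eq: "\<And>x. norm (dth c 0 x) = lam" using const_speed by (simp add: lam_def l_def)
  have lam_pos: "lam > 0" using lam_eq[of 0] imm[OF path, of 0 0] by force
  have l_pos: "l > 0" using lam_pos by (simp add: lam_def field_simps)
  define P where "P = l powr (1/8)"
  define Q where "Q = \<epsilon> powr (1/4)"
  define R where "R = A powr (1/4)"
  have P: "P > 0" using l_pos using l_pos by (simp add: P_def)
  have Q: "Q > 0" using eps_pos by (simp add: Q_def)
  have R: "R > 0" using A_pos by (simp add: R_def)
  have pw: "\<And>z a n. z > 0 \<Longrightarrow> (z powr a) ^ n = z powr (real n * a)"
    by (simp add: powr_power)
  have lP: "l = P^8" using pw[OF l_pos, of "1/8" 8] using l_pos by (simp add: P_def)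
  have eQ: "\<epsilon> = Q^4" using pw[OF eps_pos, of "1/4" 4] eps_pos by (simp add: Q_def)
  have AR: "A = R^4" using pw[OF A_pos, of "1/4" 4] A_pos by (simp add: R_def)
  have sA: "sqrt A = R^2"
    by (rule real_sqrt_unique) (use AR R in \<open>simp_all flip: power_mult\<close>)
  have sE: "sqrt \<epsilon> = Q^2"
    by (rule real_sqrt_unique) (use eQ Q in \<open>simp_all flip: power_mult\<close>)
  have l34: "l powr (3/4) = P^6" using pw[OF l_pos, of "1/8" 6] using l_pos by (simp add: P_def)
  have l14: "l powr (1/4) = P^2" using pw[OF l_pos, of "1/8" 2] using l_pos by (simp add: P_def)
  have l32: "l powr (3/2) = P^12" using pw[OF l_pos, of "1/8" 12] using l_pos by (simp add: P_def)
  have Am: "A powr (-1/4) = 1/R"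
  proof -
    have "A powr (-1/4) = A powr (-(1/4))" by simp
    also have "\<dots> = inverse (A powr (1/4))" by (rule powr_minus)
    also have "\<dots> = 1/R" by (simp add: R_def inverse_eq_divide)
    finally show ?thesis .
  qed
  have sAl: "sqrt (A * l) = R^2 * P^4"
  proof (rule real_sqrt_unique)
    have "(R^2 * P^4)^2 = R^4 * P^8" by (simp only: power_mult_distrib power_mult[symmetric]) simp
    then show "(R^2 * P^4)^2 = A * l" unfolding AR lP .
    show "0 \<le> R^2 * P^4" by simp
  qed
  have es1: "\<epsilon> < 2 * sqrt (A * l) / 8" and es2: "\<epsilon> < l powr (3/2) / 8"
  proof -
    have m: "min (2 * sqrt (A * l)) (l powr (3/2)) \<le> 2 * sqrt (A * l)" "min (2 * sqrt (A * l)) (l powr (3/2)) \<le> l powr (3/2)"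
      by simp_all
    have e: "\<epsilon> < min (2 * sqrt (A * l)) (l powr (3/2)) / 8" using eps_small by (simp only: l_def)
    show "\<epsilon> < 2 * sqrt (A * l) / 8" using e m(1) by linarith
    show "\<epsilon> < l powr (3/2) / 8" using e m(2) by linarith
  qed
  have h1: "Q^4 < R^2 * P^4 / 4" using es1 unfolding eQ sAl by simp
  have h2: "Q^4 < P^12 / 8" using es2 unfolding eQ l32 by simp
  note num = numeric[OF P Q R h1 h2]
  define x where "x = P*Q/2 + Q^4/R^2"
  have xpos: "x > 0" unfolding x_def using P Q R by (intro add_pos_pos) auto
  define h where "h = x^2 / lam"
  have hpos: "h > 0" using xpos lam_pos by (simp add: h_def)
  have hpi: "h \<le> pi"
  proof -
    have "x^2 \<le> l / 2" using num(2) lP by (simp add: x_def)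
    also have "\<dots> = pi * lam" by (simp add: lam_def)
    finally show ?thesis using lam_pos by (simp add: h_def divide_le_eq mult.commute)
  qed
  define th where "th = \<theta> - 2*pi * of_int \<lfloor>\<theta>/(2*pi)\<rfloor>"
  have th_r: "0 \<le> th" "th \<le> 2*pi" using red_range[of \<theta>] by (auto simp: th_def)
  have c01: "c 0 \<theta> - c 1 \<theta> = c 0 th - c 1 th"
    using per_red[OF path, of 0 \<theta>] per_red[OF path, of 1 \<theta>] by (simp add: th_def)
  obtain p q where pq: "0 \<le> p" "p < q" "q \<le> 2*pi" "th \<in> {p..q}" "q - p = h"
  proof (cases "th \<le> pi")
    case True
    show ?thesis by (rule that[of th "th + h"]) (use True th_r hpos hpi in auto)
  next
    case False
    show ?thesis by (rule that[of "th - h" th]) (use False th_r hpos hpi in auto)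
  qed
  have Lf0: "Lf c p q 0 = x^2"
  proof -
    have "Lf c p q 0 = integral {p..q} (\<lambda>_. lam)" unfolding Lf_def using lam_eq by simp
    also have "\<dots> = (q - p) * lam" using pq by simp
    also have "\<dots> = x^2" using pq(5) lam_pos by (simp add: h_def)
    finally show ?thesis .
  qed
  have sL: "sqrt (Lf c p q 0) = x" using Lf0 xpos by simp
  have big: "\<epsilon> / sqrt A / 2 < sqrt (Lf c p q 0)"
  proof -
    have a: "0 < P*Q/2" using P Q by simp
    have b: "0 < Q^4/R^2" using Q R by simp
    have g1: "\<And>a b::real. 0 < a \<Longrightarrow> 0 < b \<Longrightarrow> b/2 < a + b" by linarith
    have "Q^4/R^2/2 < P*Q/2 + Q^4/R^2" by (rule g1[OF a b])
    then show ?thesis unfolding sL x_def eQ sA .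
  qed
  have D: "norm (c 0 th - c 1 th) \<le> (sqrt (Lf c p q 0))\<^sup>2 + (sqrt (Lf c p q 0) + \<epsilon> / sqrt A / 2)\<^sup>2
     + (\<epsilon> / sqrt A * (sqrt (Lf c p q 0) + \<epsilon> / sqrt A / 2) + \<epsilon> / (sqrt (Lf c p q 0) - \<epsilon> / sqrt A / 2))"
    by (rule displacement[OF path A_pos eps_pos horizontal energy pq(1,2,3,4) big])
  also have "\<dots> = (P*Q/2 + Q^4/R^2)^2 + (P*Q/2 + Q^4/R^2 + Q^4/R^2/2)^2
          + (Q^4/R^2 * (P*Q/2 + Q^4/R^2 + Q^4/R^2/2) + Q^4 / (P*Q/2 + Q^4/R^2 - Q^4/R^2/2))"
    by (simp only: sL x_def eQ sA)
  also have "\<dots> \<le> 4 * (P^6 * (1/R) * Q^2 + P^2 * Q^2)" by (rule num(1))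
  also have "\<dots> = 4 * (l powr (3/4) * A powr (-1/4) + l powr (1/4)) * sqrt \<epsilon>"
    unfolding l34 Am l14 sE by (simp add: algebra_simps)
  finally show "norm (c 0 \<theta> - c 1 \<theta>)
    \<le> 4 * (curve_length (c 0) powr (3/4) * A powr (-1/4) + curve_length (c 0) powr (1/4)) * sqrt \<epsilon>"
    using c01 by (simp add: l_def)
qed

end
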